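(* Let $0\le c\le1$. For every $n\in\mathbb{N}$, $\mathcal{L}(\{x\in\mathbb{I}\colon y_n(x)\le c\})=c$.
   Context: $\mathcal{L}$ is Lebesgue measure, $\mathbb{I}=(0,1)\setminus\mathbb{Q}$. Define $T\colon[0,1)\to[0,1)$ by: for $k\in\mathbb{N}$, $Tx=\lceil 1/x\rceil x-1$ if $x\in(\frac{1}{2k},\frac{1}{2k-1})$; $Tx=1-\lfloor 1/x\rfloor x$ if $x\in(\frac{1}{2k+1},\frac{1}{2k})$; $Tx=0$ if $x\in\{0\}\cup\{1/n\colon n\ge 2\}$. For $x\in(0,1)$ define $d_1(x)=\lceil 1/x\rceil$, $s_1(x)=1$ if $x\in[\frac{1}{2k},\frac{1}{2k-1})$ for some $k$, and $d_1(x)=\lfloor 1/x\rfloor$, $s_1(x)=-1$ if $x\in[\frac{1}{2k+1},\frac{1}{2k})$ for some $k$; $d_{n+1}(x)=d_1(T^nx)$, $s_{n+1}(x)=s_1(T^nx)$, $\epsilon_1(x)=1$, $\epsilon_{n+1}(x)=\prod_{k=1}^ns_k(x)$. For $x\in\mathbb{I}$ define $y_1(x)=x$ and, for $n\ge2$, $y_n(x)=(d_{n-1}(x)-1)T^{n-1}x$ if $\epsilon_n(x)=\epsilon_{n-1}(x)$, and $y_n(x)=(d_{n-1}(x)+1)T^{n-1}x$ if $\epsilon_n(x)=-\epsilon_{n-1}(x)$. *)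

theory Defs
  imports "HOL-Analysis.Analysis"
begin

text \<open>The map T on [0,1). Outside the listed open intervals (i.e. at 0, at 1/n, n \<ge> 2,
  and outside [0,1)) the value is 0.\<close>
definition T :: "real \<Rightarrow> real" where
  "T x = (if \<exists>k::nat. k \<ge> 1 \<and> 1 / (2 * real k) < x \<and> x < 1 / (2 * real k - 1)
          then real_of_int (ceiling (1 / x)) * x - 1
          else if \<exists>k::nat. k \<ge> 1 \<and> 1 / (2 * real k + 1) < x \<and> x < 1 / (2 * real k)
          then 1 - real_of_int (floor (1 / x)) * x
          else 0)"

text \<open>First digit and sign (only meaningful on (0,1); arbitrary value 0 elsewhere).\<close>
definition d1 :: "real \<Rightarrow> int" where
  "d1 x = (if \<exists>k::nat. k \<ge> 1 \<and> 1 / (2 * real k) \<le> x \<and> x < 1 / (2 * real k - 1)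
           then ceiling (1 / x)
           else if \<exists>k::nat. k \<ge> 1 \<and> 1 / (2 * real k + 1) \<le> x \<and> x < 1 / (2 * real k)
           then floor (1 / x)
           else 0)"

definition s1 :: "real \<Rightarrow> int" where
  "s1 x = (if \<exists>k::nat. k \<ge> 1 \<and> 1 / (2 * real k) \<le> x \<and> x < 1 / (2 * real k - 1)
           then 1
           else if \<exists>k::nat. k \<ge> 1 \<and> 1 / (2 * real k + 1) \<le> x \<and> x < 1 / (2 * real k)
           then -1
           else 0)"

text \<open>Indices start at 1: d n x = d1 (T^(n-1) x) for n \<ge> 1 (index 0 is unused).\<close>
definition d :: "nat \<Rightarrow> real \<Rightarrow> int" where
  "d n x = d1 ((T ^^ (n - 1)) x)"

definition s :: "nat \<Rightarrow> real \<Rightarrow> int" where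
  "s n x = s1 ((T ^^ (n - 1)) x)"

definition eps :: "nat \<Rightarrow> real \<Rightarrow> int" where
  "eps n x = (\<Prod>k\<in>{1..<n}. s k x)"

definition Irr :: "real set" where
  "Irr = {0<..<1} - \<rat>"

definition y :: "nat \<Rightarrow> real \<Rightarrow> real" where
  "y n x = (if n \<le> 1 then x
            else if eps n x = eps (n - 1) x
              then (real_of_int (d (n - 1) x) - 1) * (T ^^ (n - 1)) x
            else if eps n x = - eps (n - 1) x
              then (real_of_int (d (n - 1) x) + 1) * (T ^^ (n - 1)) x
            else 0)"

end

theory Submission
  imports Defs
begin

lemma Irr_D: assumes "z \<in> Irr" shows "0 < z" "z < 1" "z \<notin> \<rat>" "1 / z \<notin> \<rat>"
proof -
  show "0 < z" "z < 1" "z \<notin> \<rat>" using assms by (auto simp: Irr_def)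
  then show "1 / z \<notin> \<rat>" by (metis Rats_1 Rats_divide divide_divide_eq_right div_by_1 nonzero_mult_div_cancel_left)
qed

lemma Irr_ne_nat: "z \<in> Irr \<Longrightarrow> 1 / z \<noteq> real p"
  using Irr_D(4) Rats_of_nat by metis

lemma Irr_ne_nat': "z \<in> Irr \<Longrightarrow> 1 / z \<noteq> 2 * real p - 1" "z \<in> Irr \<Longrightarrow> 1 / z \<noteq> 2 * real p + 1"
  "z \<in> Irr \<Longrightarrow> 1 / z \<noteq> 2 * real p"
proof -
  assume z: "z \<in> Irr"
  have "(2 * real p - 1) \<in> \<rat>" "(2 * real p + 1) \<in> \<rat>" "(2 * real p) \<in> \<rat>" by auto
  then show "1 / z \<noteq> 2 * real p - 1" "1 / z \<noteq> 2 * real p + 1" "1 / z \<noteq> 2 * real p"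
    using Irr_D(4)[OF z] by metis+
qed

lemma half_exists:
  assumes z: "z \<in> Irr"
  shows "\<exists>k::nat. k \<ge> 1 \<and> ((2 * real k - 1 < 1 / z \<and> 1 / z < 2 * real k) \<or> (2 * real k < 1 / z \<and> 1 / z < 2 * real k + 1))"
proof -
  have z0: "0 < z" "z < 1" using Irr_D[OF z] by auto
  have w1: "1 < 1 / z" using z0 by (simp add: field_simps)
  define p where "p = nat (floor (1 / z))"
  have fl: "real_of_int (floor (1/z)) \<le> 1/z" "1/z < real_of_int (floor (1/z)) + 1" by linarith+
  have p1: "p \<ge> 1" using w1 fl unfolding p_def by linarith
  have "floor (1/z) \<ge> 0" using w1 fl by linarith
  then have pr: "real p = real_of_int (floor (1/z))" unfolding p_def by simp
  have pl: "real p < 1 / z" using fl pr Irr_ne_nat[OF z, of p] by linarith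
  have pu: "1 / z < real p + 1" using fl pr by auto
  show ?thesis
  proof (cases "even p")
    case True
    then obtain k where k: "p = 2 * k" by blast
    show ?thesis using k pl pu p1 by (intro exI[of _ k]) auto
  next
    case False
    then obtain k where k: "p = 2 * k + 1" using oddE by blast
    show ?thesis using k pl pu p1 by (intro exI[of _ "k+1"]) auto
  qed
qed

lemma plus_eval:
  assumes z0: "0 < z" and k: "k \<ge> 1" and a: "2 * real k - 1 < 1 / z" and b: "1 / z < 2 * real k"
  shows "T z = 2 * real k * z - 1" "d1 z = 2 * int k" "s1 z = 1"
proof -
  have k1: "2 * real k - 1 > 0" using k by simp
  have h1: "1 / (2 * real k) < z" using b z0 k by (simp add: field_simps)
  have h2: "z < 1 / (2 * real k - 1)" using a z0 k1 by (simp add: field_simps)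
  have c: "ceiling (1 / z) = 2 * int k" using a b by (simp add: ceiling_eq_iff)
  have e1: "\<exists>k'::nat. k' \<ge> 1 \<and> 1 / (2 * real k') < z \<and> z < 1 / (2 * real k' - 1)"
    using h1 h2 k by (intro exI[of _ k]) auto
  have e2: "\<exists>k'::nat. k' \<ge> 1 \<and> 1 / (2 * real k') \<le> z \<and> z < 1 / (2 * real k' - 1)"
    using h1 h2 k by (intro exI[of _ k]) auto
  show "T z = 2 * real k * z - 1" unfolding T_def using e1 c by simp
  show "d1 z = 2 * int k" unfolding d1_def using e2 c by simp
  show "s1 z = 1" unfolding s1_def using e2 by simp
qed

lemma minus_eval:
  assumes z0: "0 < z" and k: "k \<ge> 1" and a: "2 * real k < 1 / z" and b: "1 / z < 2 * real k + 1"
  shows "T z = 1 - 2 * real k * z" "d1 z = 2 * int k" "s1 z = -1"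
proof -
  have h1: "1 / (2 * real k + 1) < z" using b z0 k by (simp add: field_simps)
  have h2: "z < 1 / (2 * real k)" using a z0 k by (simp add: field_simps)
  have c: "floor (1 / z) = 2 * int k" using a b by (simp add: floor_eq_iff)
  have n: "\<not> (\<exists>k'::nat. k' \<ge> 1 \<and> 1 / (2 * real k') \<le> z \<and> z < 1 / (2 * real k' - 1))"
  proof
    assume "\<exists>k'::nat. k' \<ge> 1 \<and> 1 / (2 * real k') \<le> z \<and> z < 1 / (2 * real k' - 1)"
    then obtain k' :: nat where k': "k' \<ge> 1" "1 / (2 * real k') \<le> z" "z < 1 / (2 * real k' - 1)" by blast
    have k1: "2 * real k' - 1 > 0" using k' by simp
    have "1 / z \<le> 2 * real k'" using k' z0 by (simp add: field_simps)
    moreover have "2 * real k' - 1 < 1 / z" using k' z0 k1 by (simp add: field_simps)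
    ultimately have "real k < real k'" "real k' < real k + 1" using a b by linarith+
    then have "k < k'" "real k' < real (k + 1)" by simp_all
    then have "k < k'" "k' < k + 1" using of_nat_less_iff by blast+
    then show False by linarith
  qed
  then have n': "\<not> (\<exists>k'::nat. k' \<ge> 1 \<and> 1 / (2 * real k') < z \<and> z < 1 / (2 * real k' - 1))"
    by force
  have e1: "\<exists>k'::nat. k' \<ge> 1 \<and> 1 / (2 * real k' + 1) < z \<and> z < 1 / (2 * real k')"
    using h1 h2 k by (intro exI[of _ k]) auto
  have e2: "\<exists>k'::nat. k' \<ge> 1 \<and> 1 / (2 * real k' + 1) \<le> z \<and> z < 1 / (2 * real k')"
    using h1 h2 k by (intro exI[of _ k]) auto
  show "T z = 1 - 2 * real k * z" unfolding T_def if_not_P[OF n'] if_P[OF e1] c by simp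
  show "d1 z = 2 * int k" unfolding d1_def if_not_P[OF n] if_P[OF e2] c by simp
  show "s1 z = -1" unfolding s1_def if_not_P[OF n] if_P[OF e2] by simp
qed


lemma T_Irr: assumes z: "z \<in> Irr" shows "T z \<in> Irr"
proof -
  have z0: "0 < z" "z \<notin> \<rat>" using Irr_D[OF z] by auto
  obtain k :: nat where k: "k \<ge> 1" and h: "(2 * real k - 1 < 1 / z \<and> 1 / z < 2 * real k) \<or> (2 * real k < 1 / z \<and> 1 / z < 2 * real k + 1)"
    using half_exists[OF z] by blast
  have k1: "2 * real k - 1 > 0" using k by simp
  from h show ?thesis
  proof
    assume a: "2 * real k - 1 < 1 / z \<and> 1 / z < 2 * real k"
    have e: "T z = 2 * real k * z - 1" using plus_eval[OF z0(1) k] a by auto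
    have "1 < 2 * real k * z" using a z0 by (simp add: field_simps)
    moreover have "(2 * real k - 1) * z < 1" using a z0 by (simp add: field_simps)
    then have "2 * real k * z - 1 < 1" using Irr_D(2)[OF z] by (simp add: algebra_simps)
    moreover have "2 * real k * z - 1 \<notin> \<rat>"
    proof
      assume "2 * real k * z - 1 \<in> \<rat>"
      then have "(2 * real k * z - 1 + 1) / (2 * real k) \<in> \<rat>" by (intro Rats_divide Rats_add) auto
      then show False using z0 k by simp
    qed
    ultimately show ?thesis unfolding e Irr_def using z0 by (auto simp: algebra_simps)
  next
    assume a: "2 * real k < 1 / z \<and> 1 / z < 2 * real k + 1"
    have e: "T z = 1 - 2 * real k * z" using minus_eval[OF z0(1) k] a by auto
    have "2 * real k * z < 1" using a z0 by (simp add: field_simps)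
    moreover have "0 < 2 * real k * z" using k z0 by simp
    moreover have "1 - 2 * real k * z \<notin> \<rat>"
    proof
      assume "1 - 2 * real k * z \<in> \<rat>"
      then have "1 - (1 - 2 * real k * z) \<in> \<rat>" by (rule Rats_diff[OF Rats_1])
      then have "(1 - (1 - 2 * real k * z)) / (2 * real k) \<in> \<rat>" by (rule Rats_divide) simp
      then show False using z0 k by simp
    qed
    ultimately show ?thesis unfolding e Irr_def using z0 by (auto simp: algebra_simps)
  qed
qed

lemma funpow_Irr: "x \<in> Irr \<Longrightarrow> (T ^^ m) x \<in> Irr"
  by (induction m) (auto intro: T_Irr)

lemma plus_closed:
  assumes z: "z \<in> Irr" and k: "k \<ge> 1" and "1 / (2 * real k) \<le> z" "z \<le> 1 / (2 * real k - 1)"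
  shows "2 * real k - 1 < 1 / z \<and> 1 / z < 2 * real k"
proof -
  have z0: "0 < z" using Irr_D[OF z] by auto
  have k1: "2 * real k - 1 > 0" using k by simp
  have "2 * real k - 1 \<le> 1 / z" "1 / z \<le> 2 * real k" using assms z0 k1 by (auto simp: field_simps)
  then show ?thesis using Irr_ne_nat'[OF z, of k] by auto
qed

lemma minus_closed:
  assumes z: "z \<in> Irr" and k: "k \<ge> 1" and "1 / (2 * real k + 1) \<le> z" "z \<le> 1 / (2 * real k)"
  shows "2 * real k < 1 / z \<and> 1 / z < 2 * real k + 1"
proof -
  have z0: "0 < z" using Irr_D[OF z] by auto
  have "2 * real k \<le> 1 / z" "1 / z \<le> 2 * real k + 1" using assms z0 by (auto simp: field_simps)
  then show ?thesis using Irr_ne_nat'[OF z, of k] by auto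
qed

lemma piece_closed:
  assumes z: "z \<in> Irr" and k: "k \<ge> 1" and "1 / (2 * real k + 1) \<le> z" "z \<le> 1 / (2 * real k - 1)"
  shows "2 * real k - 1 < 1 / z \<and> 1 / z < 2 * real k + 1"
proof -
  have z0: "0 < z" using Irr_D[OF z] by auto
  have k1: "2 * real k - 1 > 0" using k by simp
  have "2 * real k - 1 \<le> 1 / z" "1 / z \<le> 2 * real k + 1" using assms z0 k1 by (auto simp: field_simps)
  then show ?thesis using Irr_ne_nat'[OF z, of k] by auto
qed

lemma nat_eq_from_real:
  fixes a b :: nat
  assumes "real a < real b + 1" "real b < real a + 1"
  shows "a = b"
proof -
  have "real a < real (b + 1)" "real b < real (a + 1)" using assms by simp_all
  then have "a < b + 1" "b < a + 1" using of_nat_less_iff by blast+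
  then show ?thesis by linarith
qed


lemma inv_le: "0 < (a::real) \<Longrightarrow> a \<le> b \<Longrightarrow> 1 / b \<le> 1 / a"
  by (simp add: frac_le)

lemma le_inv_mult: "0 < (a::real) \<Longrightarrow> v \<le> 1 / a \<Longrightarrow> v * a \<le> 1"
  by (simp add: field_simps)

lemma step_pt:
  assumes z: "z \<in> Irr" and j: "j \<ge> 1" and u: "1 / (2 * real j + 1) \<le> u" and uv: "u \<le> v"
    and v: "v \<le> 1 / (2 * real j - 1)"
  shows "T z \<in> {u..v} \<longleftrightarrow>
    ((\<exists>k\<in>{1..j}. z \<in> {(1 + u) / (2 * real k)..(1 + v) / (2 * real k)}) \<or>
     (\<exists>k\<in>{1..<j}. z \<in> {(1 - v) / (2 * real k)..(1 - u) / (2 * real k)}))"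
proof -
  have z0: "0 < z" "z < 1" using Irr_D[OF z] by auto
  have u0: "0 < u" using u j by (smt (verit) divide_pos_pos of_nat_0_le_iff)
  show ?thesis
  proof
    assume Tz: "T z \<in> {u..v}"
    obtain k :: nat where k: "k \<ge> 1" and h: "(2 * real k - 1 < 1 / z \<and> 1 / z < 2 * real k) \<or> (2 * real k < 1 / z \<and> 1 / z < 2 * real k + 1)"
      using half_exists[OF z] by blast
    have k0: "0 < real k" using k by simp
    have k1: "2 * real k - 1 > 0" using k by simp
    from h show "((\<exists>k\<in>{1..j}. z \<in> {(1 + u) / (2 * real k)..(1 + v) / (2 * real k)}) \<or>
     (\<exists>k\<in>{1..<j}. z \<in> {(1 - v) / (2 * real k)..(1 - u) / (2 * real k)}))"
    proof
      assume a: "2 * real k - 1 < 1 / z \<and> 1 / z < 2 * real k"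
      have e: "T z = 2 * real k * z - 1" using plus_eval[OF z0(1) k] a by auto
      show ?thesis
      proof (cases "k \<le> j")
        case True
        have "u \<le> 2 * real k * z - 1" "2 * real k * z - 1 \<le> v" using Tz e by auto
        then have "(1 + u) / (2 * real k) \<le> z" "z \<le> (1 + v) / (2 * real k)" using k0 by (auto simp: field_simps)
        then show ?thesis using True k by auto
      next
        case False
        have zk: "z * (2 * real k - 1) < 1" using a z0 k1 by (simp add: field_simps)
        have "(2 * real k * z - 1) * (2 * real k - 1) = 2 * real k * (z * (2 * real k - 1)) - (2 * real k - 1)"
          by (simp add: algebra_simps)
        also have "\<dots> < 1"
        proof -
          have "2 * real k * (z * (2 * real k - 1)) < 2 * real k * 1" using zk k0 by (intro mult_strict_left_mono) auto
          then show ?thesis by linarith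
        qed
        finally have "2 * real k * z - 1 < 1 / (2 * real k - 1)" using k1 by (simp add: field_simps)
        also have "1 / (2 * real k - 1) \<le> 1 / (2 * real j + 1)"
          using False by (intro inv_le) auto
        finally have "T z < u" using e u by linarith
        then show ?thesis using Tz by auto
      qed
    next
      assume a: "2 * real k < 1 / z \<and> 1 / z < 2 * real k + 1"
      have e: "T z = 1 - 2 * real k * z" using minus_eval[OF z0(1) k] a by auto
      show ?thesis
      proof (cases "k < j")
        case True
        have "u \<le> 1 - 2 * real k * z" "1 - 2 * real k * z \<le> v" using Tz e by auto
        then have "(1 - v) / (2 * real k) \<le> z" "z \<le> (1 - u) / (2 * real k)" using k0 by (auto simp: field_simps)
        then show ?thesis using True k by auto
      next
        case False
        have zk: "z * (2 * real k + 1) > 1" using a z0 by (simp add: field_simps)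
        have "(1 - 2 * real k * z) * (2 * real k + 1) = (2 * real k + 1) - 2 * real k * (z * (2 * real k + 1))"
          by (simp add: algebra_simps)
        also have "\<dots> < 1"
        proof -
          have "2 * real k * 1 < 2 * real k * (z * (2 * real k + 1))" using zk k0 by (intro mult_strict_left_mono) auto
          then show ?thesis by linarith
        qed
        finally have "1 - 2 * real k * z < 1 / (2 * real k + 1)" by (simp add: field_simps)
        also have "1 / (2 * real k + 1) \<le> 1 / (2 * real j + 1)"
          using False by (intro inv_le) auto
        finally have "T z < u" using e u by linarith
        then show ?thesis using Tz by auto
      qed
    qed
  next
    assume "((\<exists>k\<in>{1..j}. z \<in> {(1 + u) / (2 * real k)..(1 + v) / (2 * real k)}) \<or>
     (\<exists>k\<in>{1..<j}. z \<in> {(1 - v) / (2 * real k)..(1 - u) / (2 * real k)}))"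
    then show "T z \<in> {u..v}"
    proof
      assume "\<exists>k\<in>{1..j}. z \<in> {(1 + u) / (2 * real k)..(1 + v) / (2 * real k)}"
      then obtain k where k: "k \<ge> 1" "k \<le> j" and zi: "(1 + u) / (2 * real k) \<le> z" "z \<le> (1 + v) / (2 * real k)" by auto
      have k0: "0 < real k" using k by simp
      have k1: "2 * real k - 1 > 0" using k by simp
      have "v \<le> 1 / (2 * real k - 1)" using v k1 k(2) inv_le[of "2 * real k - 1" "2 * real j - 1"] by auto
      then have "v * (2 * real k - 1) \<le> 1" using k1 le_inv_mult by blast
      then have "(1 + v) / (2 * real k) \<le> 1 / (2 * real k - 1)" using k0 k1 by (simp add: field_simps)
      moreover have "1 / (2 * real k) \<le> (1 + u) / (2 * real k)" using u0 k0 by (simp add: divide_right_mono)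
      ultimately have a: "2 * real k - 1 < 1 / z \<and> 1 / z < 2 * real k" using plus_closed[OF z k(1)] zi by auto
      have e: "T z = 2 * real k * z - 1" using plus_eval[OF z0(1) k(1)] a by auto
      show ?thesis using zi k0 unfolding e by (auto simp: field_simps)
    next
      assume "\<exists>k\<in>{1..<j}. z \<in> {(1 - v) / (2 * real k)..(1 - u) / (2 * real k)}"
      then obtain k where k: "k \<ge> 1" "k < j" and zi: "(1 - v) / (2 * real k) \<le> z" "z \<le> (1 - u) / (2 * real k)" by auto
      have k0: "0 < real k" using k by simp
      have "v \<le> 1 / (2 * real k + 1)" using v k(2) inv_le[of "2 * real k + 1" "2 * real j - 1"] by auto
      then have "v * (2 * real k + 1) \<le> 1" using le_inv_mult[of "2 * real k + 1"] by auto
      then have "1 / (2 * real k + 1) \<le> (1 - v) / (2 * real k)" using k0 by (simp add: field_simps)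
      moreover have "(1 - u) / (2 * real k) \<le> 1 / (2 * real k)" using u0 k0 by (simp add: divide_right_mono)
      ultimately have a: "2 * real k < 1 / z \<and> 1 / z < 2 * real k + 1" using minus_closed[OF z k(1)] zi by auto
      have e: "T z = 1 - 2 * real k * z" using minus_eval[OF z0(1) k(1)] a by auto
      show ?thesis using zi k0 unfolding e by (auto simp: field_simps)
    qed
  qed
qed


definition Sset :: "nat \<Rightarrow> real \<Rightarrow> real \<Rightarrow> real set" where
  "Sset m u v = {x \<in> Irr. (T ^^ m) x \<in> {u..v}}"

definition Inv :: "nat \<Rightarrow> bool" where
  "Inv m \<longleftrightarrow> (\<exists>Cf::nat \<Rightarrow> real. \<forall>j\<ge>1. \<forall>u v. 1 / (2 * real j + 1) \<le> u \<longrightarrow> u \<le> v \<longrightarrow> v \<le> 1 / (2 * real j - 1) \<longrightarrow>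
     Sset m u v \<in> sets lebesgue \<and> measure lebesgue (Sset m u v) = Cf j * (v - u))"

lemma Irr_sub: "Irr \<subseteq> {0..1}" unfolding Irr_def by auto

lemma fin_em: "A \<subseteq> {0..1::real} \<Longrightarrow> emeasure lebesgue A \<noteq> \<infinity>"
proof -
  assume "A \<subseteq> {0..1::real}"
  then have "emeasure lebesgue A \<le> emeasure lebesgue {0..1::real}" by (intro emeasure_mono) auto
  then have "emeasure lebesgue A \<le> 1" by simp
  then show ?thesis using ennreal_one_less_top by (metis infinity_ennreal_def leD)
qed

lemma Rats_null: "\<rat> \<in> null_sets lebesgue"
  by (simp add: countable_rat countable_imp_null_set_lborel null_sets_completionI)

lemma Irr_Icc: "0 \<le> u \<Longrightarrow> v \<le> 1 \<Longrightarrow> {x \<in> Irr. x \<in> {u..v}} = {u..v} - \<rat>"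
proof (intro set_eqI iffI)
  fix x assume "0 \<le> u" "v \<le> 1" and x: "x \<in> {u..v} - \<rat>"
  then have "x \<noteq> 0" "x \<noteq> 1" "0 \<le> x" "x \<le> 1" by auto
  then show "x \<in> {x \<in> Irr. x \<in> {u..v}}" using x unfolding Irr_def by auto
qed (auto simp: Irr_def)

lemma Icc_minus_Rats:
  assumes "u \<le> v" shows "{u..v} - \<rat> \<in> sets lebesgue" "measure lebesgue ({u..v} - \<rat>) = v - u"
proof -
  have a: "{u..v} \<in> sets lebesgue" by simp
  show "{u..v} - \<rat> \<in> sets lebesgue" using a Rats_null by auto
  show "measure lebesgue ({u..v} - \<rat>) = v - u" using measure_Diff_null_set[OF a Rats_null] assms by simp
qed

lemma Inv0: "Inv 0"
  unfolding Inv_def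
proof (intro exI[of _ "\<lambda>_. 1"] allI impI)
  fix j :: nat and u v :: real
  assume j: "j \<ge> 1" and u: "1 / (2 * real j + 1) \<le> u" and uv: "u \<le> v" and v: "v \<le> 1 / (2 * real j - 1)"
  have u0: "0 \<le> u" using u by (smt (verit) divide_pos_pos of_nat_0_le_iff)
  have "1 / (2 * real j - 1) \<le> 1" using j by (simp add: field_simps)
  then have v1: "v \<le> 1" using v by linarith
  have e: "Sset 0 u v = {u..v} - \<rat>" unfolding Sset_def using Irr_Icc[OF u0 v1] by simp
  show "Sset 0 u v \<in> sets lebesgue \<and> measure lebesgue (Sset 0 u v) = 1 * (v - u)"
    unfolding e using Icc_minus_Rats[OF uv] by simp
qed


lemma pbounds:
  assumes u0: "0 \<le> u" and v: "v \<le> 1 / (2 * real j - 1)" and k: "1 \<le> k" "k \<le> j"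
  shows "1 / (2 * real k) \<le> (1 + u) / (2 * real k)" "(1 + v) / (2 * real k) \<le> 1 / (2 * real k - 1)"
proof -
  have k0: "0 < real k" using k by simp
  have k1: "2 * real k - 1 > 0" using k by simp
  have "v \<le> 1 / (2 * real k - 1)" using v k1 k(2) inv_le[of "2 * real k - 1" "2 * real j - 1"] by auto
  then have "v * (2 * real k - 1) \<le> 1" using k1 le_inv_mult by blast
  then show "(1 + v) / (2 * real k) \<le> 1 / (2 * real k - 1)" using k0 k1 by (simp add: field_simps)
  show "1 / (2 * real k) \<le> (1 + u) / (2 * real k)" using u0 k0 by (simp add: divide_right_mono)
qed

lemma mbounds:
  assumes u0: "0 \<le> u" and v: "v \<le> 1 / (2 * real j - 1)" and k: "1 \<le> k" "k < j"
  shows "1 / (2 * real k + 1) \<le> (1 - v) / (2 * real k)" "(1 - u) / (2 * real k) \<le> 1 / (2 * real k)"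
proof -
  have k0: "0 < real k" using k by simp
  have "v \<le> 1 / (2 * real k + 1)" using v k(2) inv_le[of "2 * real k + 1" "2 * real j - 1"] by auto
  then have "v * (2 * real k + 1) \<le> 1" using le_inv_mult[of "2 * real k + 1"] by auto
  then show "1 / (2 * real k + 1) \<le> (1 - v) / (2 * real k)" using k0 by (simp add: field_simps)
  show "(1 - u) / (2 * real k) \<le> 1 / (2 * real k)" using u0 k0 by (simp add: divide_right_mono)
qed

lemma half_order: "1 \<le> k \<Longrightarrow> 1 / (2 * real k + 1) \<le> 1 / (2 * real k)" "1 \<le> k \<Longrightarrow> 1 / (2 * real k) \<le> 1 / (2 * real k - 1)"
  by (auto intro!: inv_le)

lemma Inv_step:
  assumes "Inv m" shows "Inv (Suc m)"
proof -
  from assms obtain Cf where IH: "\<forall>j\<ge>1. \<forall>u v. 1 / (2 * real j + 1) \<le> u \<longrightarrow> u \<le> v \<longrightarrow> v \<le> 1 / (2 * real j - 1) \<longrightarrow>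
     Sset m u v \<in> sets lebesgue \<and> measure lebesgue (Sset m u v) = Cf j * (v - u)" unfolding Inv_def by blast
  define C' where "C' j = (\<Sum>k\<in>{1..j}. Cf k / (2 * real k)) + (\<Sum>k\<in>{1..<j}. Cf k / (2 * real k))" for j
  show ?thesis unfolding Inv_def
  proof (intro exI[of _ C'] allI impI)
    fix j :: nat and u v :: real
    assume j: "j \<ge> 1" and u: "1 / (2 * real j + 1) \<le> u" and uv: "u \<le> v" and v: "v \<le> 1 / (2 * real j - 1)"
    have u0: "0 \<le> u" using u by (smt (verit) divide_pos_pos of_nat_0_le_iff)
    define P where "P k = Sset m ((1 + u) / (2 * real k)) ((1 + v) / (2 * real k))" for k
    define M where "M k = Sset m ((1 - v) / (2 * real k)) ((1 - u) / (2 * real k))" for k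
    have eq: "Sset (Suc m) u v = (\<Union>k\<in>{1..j}. P k) \<union> (\<Union>k\<in>{1..<j}. M k)"
    proof (intro set_eqI)
      fix x
      show "x \<in> Sset (Suc m) u v \<longleftrightarrow> x \<in> (\<Union>k\<in>{1..j}. P k) \<union> (\<Union>k\<in>{1..<j}. M k)"
      proof (cases "x \<in> Irr")
        case True
        then have "(T ^^ m) x \<in> Irr" by (rule funpow_Irr)
        note st = step_pt[OF this j u uv v]
        show ?thesis unfolding P_def M_def Sset_def using True st by auto
      next
        case False
        then show ?thesis unfolding P_def M_def Sset_def by auto
      qed
    qed
    have Pk: "P k \<in> sets lebesgue \<and> measure lebesgue (P k) = Cf k / (2 * real k) * (v - u)" if k: "k \<in> {1..j}" for k
    proof -
      have k1: "1 \<le> k" "k \<le> j" using k by auto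
      have k0: "0 < real k" using k by simp
      note b = pbounds[OF u0 v k1] half_order[OF k1(1)]
      have "(1 + u) / (2 * real k) \<le> (1 + v) / (2 * real k)" using uv k0 by (simp add: divide_right_mono)
      then have h: "P k \<in> sets lebesgue \<and> measure lebesgue (P k) = Cf k * ((1 + v) / (2 * real k) - (1 + u) / (2 * real k))"
        unfolding P_def using IH k1(1) b by auto
      have "(1 + v) / (2 * real k) - (1 + u) / (2 * real k) = (v - u) / (2 * real k)" using k0 by (simp add: field_simps)
      then show ?thesis using h by simp
    qed
    have Mk: "M k \<in> sets lebesgue \<and> measure lebesgue (M k) = Cf k / (2 * real k) * (v - u)" if k: "k \<in> {1..<j}" for k
    proof -
      have k1: "1 \<le> k" "k < j" using k by auto
      have k0: "0 < real k" using k by simp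
      note b = mbounds[OF u0 v k1] half_order[OF k1(1)]
      have "(1 - v) / (2 * real k) \<le> (1 - u) / (2 * real k)" using uv k0 by (simp add: divide_right_mono)
      then have h: "M k \<in> sets lebesgue \<and> measure lebesgue (M k) = Cf k * ((1 - u) / (2 * real k) - (1 - v) / (2 * real k))"
        unfolding M_def using IH k1(1) b by auto
      have "(1 - u) / (2 * real k) - (1 - v) / (2 * real k) = (v - u) / (2 * real k)" using k0 by (simp add: field_simps)
      then show ?thesis using h by simp
    qed
    have Pin: "2 * real k - 1 < 1 / (T ^^ m) x \<and> 1 / (T ^^ m) x < 2 * real k" if k: "k \<in> {1..j}" and x: "x \<in> P k" for k x
    proof -
      have k1: "1 \<le> k" "k \<le> j" using k by auto
      note b = pbounds[OF u0 v k1]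
      have xi: "x \<in> Irr" and "(1 + u) / (2 * real k) \<le> (T ^^ m) x" "(T ^^ m) x \<le> (1 + v) / (2 * real k)"
        using x unfolding P_def Sset_def by auto
      then show ?thesis using plus_closed[OF funpow_Irr[OF xi] k1(1)] b by auto
    qed
    have Min: "2 * real k < 1 / (T ^^ m) x \<and> 1 / (T ^^ m) x < 2 * real k + 1" if k: "k \<in> {1..<j}" and x: "x \<in> M k" for k x
    proof -
      have k1: "1 \<le> k" "k < j" using k by auto
      note b = mbounds[OF u0 v k1]
      have xi: "x \<in> Irr" and "(1 - v) / (2 * real k) \<le> (T ^^ m) x" "(T ^^ m) x \<le> (1 - u) / (2 * real k)"
        using x unfolding M_def Sset_def by auto
      then show ?thesis using minus_closed[OF funpow_Irr[OF xi] k1(1)] b by auto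
    qed
    have dP: "disjoint_family_on P {1..j}"
      unfolding disjoint_family_on_def
    proof (intro ballI impI)
      fix k k' assume k: "k \<in> {1..j}" and k': "k' \<in> {1..j}" and ne: "k \<noteq> k'"
      show "P k \<inter> P k' = {}"
      proof (rule ccontr)
        assume "P k \<inter> P k' \<noteq> {}"
        then obtain x where "x \<in> P k" "x \<in> P k'" by blast
        from Pin[OF k this(1)] Pin[OF k' this(2)] have "k = k'" by (intro nat_eq_from_real) linarith+
        then show False using ne by simp
      qed
    qed
    have dM: "disjoint_family_on M {1..<j}"
      unfolding disjoint_family_on_def
    proof (intro ballI impI)
      fix k k' assume k: "k \<in> {1..<j}" and k': "k' \<in> {1..<j}" and ne: "k \<noteq> k'"
      show "M k \<inter> M k' = {}"
      proof (rule ccontr)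
        assume "M k \<inter> M k' \<noteq> {}"
        then obtain x where "x \<in> M k" "x \<in> M k'" by blast
        from Min[OF k this(1)] Min[OF k' this(2)] have "k = k'" by (intro nat_eq_from_real) linarith+
        then show False using ne by simp
      qed
    qed
    have dPM: "(\<Union>k\<in>{1..j}. P k) \<inter> (\<Union>k\<in>{1..<j}. M k) = {}"
    proof (rule ccontr)
      assume "(\<Union>k\<in>{1..j}. P k) \<inter> (\<Union>k\<in>{1..<j}. M k) \<noteq> {}"
      then obtain x k k' where k: "k \<in> {1..j}" "x \<in> P k" and k': "k' \<in> {1..<j}" "x \<in> M k'" by blast
      have a: "real k < real k' + 1" "real k' < real k" using Pin[OF k] Min[OF k'] by auto
      then have "k = k'" by (intro nat_eq_from_real) auto
      then show False using a by simp
    qed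
    have subP: "P k \<subseteq> {0..1}" "M k \<subseteq> {0..1}" for k unfolding P_def M_def Sset_def using Irr_sub by auto
    have mP: "measure lebesgue (\<Union>k\<in>{1..j}. P k) = (\<Sum>k\<in>{1..j}. measure lebesgue (P k))"
    proof (rule measure_finite_Union)
      show "P ` {1..j} \<subseteq> sets lebesgue" using Pk by blast
      show "emeasure lebesgue (P i) \<noteq> \<infinity>" for i using fin_em[OF subP(1)] by blast
    qed (use dP in auto)
    have mM: "measure lebesgue (\<Union>k\<in>{1..<j}. M k) = (\<Sum>k\<in>{1..<j}. measure lebesgue (M k))"
    proof (rule measure_finite_Union)
      show "M ` {1..<j} \<subseteq> sets lebesgue" using Mk by blast
      show "emeasure lebesgue (M i) \<noteq> \<infinity>" for i using fin_em[OF subP(2)] by blast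
    qed (use dM in auto)
    have sP: "(\<Union>k\<in>{1..j}. P k) \<in> sets lebesgue" using Pk by auto
    have sM: "(\<Union>k\<in>{1..<j}. M k) \<in> sets lebesgue" using Mk by auto
    have m: "measure lebesgue (Sset (Suc m) u v) = (\<Sum>k\<in>{1..j}. measure lebesgue (P k)) + (\<Sum>k\<in>{1..<j}. measure lebesgue (M k))"
      unfolding eq mP[symmetric] mM[symmetric]
      by (rule measure_Union[OF fin_em fin_em sP sM dPM]) (use subP in auto)
    also have "\<dots> = (\<Sum>k\<in>{1..j}. Cf k / (2 * real k) * (v - u)) + (\<Sum>k\<in>{1..<j}. Cf k / (2 * real k) * (v - u))"
      using Pk Mk by simp
    also have "\<dots> = C' j * (v - u)" unfolding C'_def by (simp only: sum_distrib_right distrib_right)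
    finally show "Sset (Suc m) u v \<in> sets lebesgue \<and> measure lebesgue (Sset (Suc m) u v) = C' j * (v - u)"
      using sP sM eq by auto
  qed
qed

lemma Inv_all: "Inv m"
  by (induction m) (auto intro: Inv0 Inv_step)


definition aa :: "real \<Rightarrow> nat \<Rightarrow> real" where
  "aa c k = (1 - c / (2 * real k + 1)) / (2 * real k)"
definition bb :: "real \<Rightarrow> nat \<Rightarrow> real" where
  "bb c k = (1 + c / (2 * real k - 1)) / (2 * real k)"

lemma Kid: assumes K: "K > (1::real)" shows "(1 + c / (K - 1)) / K - (1 - c / (K + 1)) / K = c * (1 / (K - 1) - 1 / (K + 1))"
proof -
  have a: "K - 1 \<noteq> 0" "K + 1 \<noteq> 0" "K \<noteq> 0" using K by auto
  have "(1 + c / (K - 1)) / K - (1 - c / (K + 1)) / K = (c / (K - 1) + c / (K + 1)) / K"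
    by (simp add: diff_divide_distrib[symmetric])
  also have "c / (K - 1) + c / (K + 1) = c * (2 * K) / ((K - 1) * (K + 1))" using a by (simp add: field_simps)
  also have "1 / (K - 1) - 1 / (K + 1) = 2 / ((K - 1) * (K + 1))" using a by (simp add: field_simps)
  ultimately show ?thesis using a by simp
qed

lemma ab_bounds:
  assumes k: "k \<ge> 1" and c: "0 \<le> c" "c \<le> 1"
  shows "1 / (2 * real k + 1) \<le> aa c k" "aa c k \<le> 1 / (2 * real k)" "1 / (2 * real k) \<le> bb c k"
    "bb c k \<le> 1 / (2 * real k - 1)" "bb c k - aa c k = c * (1 / (2 * real k - 1) - 1 / (2 * real k + 1))"
proof -
  have k0: "0 < real k" using k by simp
  have k1: "2 * real k - 1 > 0" using k by simp
  have k2: "2 * real k + 1 > 0" using k by simp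
  have "c / (2 * real k + 1) \<le> 1 / (2 * real k + 1)" using c k2 by (simp add: divide_right_mono)
  then have "1 - 1 / (2 * real k + 1) \<le> 1 - c / (2 * real k + 1)" by linarith
  moreover have "1 - 1 / (2 * real k + 1) = (2 * real k) / (2 * real k + 1)" using k2 by (simp add: field_simps)
  ultimately have "(2 * real k) / (2 * real k + 1) / (2 * real k) \<le> aa c k"
    unfolding aa_def using k0 by (intro divide_right_mono) auto
  then show "1 / (2 * real k + 1) \<le> aa c k" using k0 by simp
  show "aa c k \<le> 1 / (2 * real k)" unfolding aa_def using k0 k2 c by (intro divide_right_mono) auto
  show "1 / (2 * real k) \<le> bb c k" unfolding bb_def using k0 k1 c by (intro divide_right_mono) auto
  have "c / (2 * real k - 1) \<le> 1 / (2 * real k - 1)" using c k1 by (simp add: divide_right_mono)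
  then have "1 + c / (2 * real k - 1) \<le> 1 + 1 / (2 * real k - 1)" by linarith
  moreover have "1 + 1 / (2 * real k - 1) = (2 * real k) / (2 * real k - 1)" using k1 by (simp add: field_simps)
  ultimately have "bb c k \<le> (2 * real k) / (2 * real k - 1) / (2 * real k)"
    unfolding bb_def using k0 by (intro divide_right_mono) auto
  then show "bb c k \<le> 1 / (2 * real k - 1)" using k0 by simp
  show "bb c k - aa c k = c * (1 / (2 * real k - 1) - 1 / (2 * real k + 1))"
    unfolding aa_def bb_def using Kid[of "2 * real k" c] k by simp
qed

lemma minus_y:
  assumes k: "k \<ge> 1"
  shows "(2 * real k + 1) * (1 - 2 * real k * z) \<le> c \<longleftrightarrow> aa c k \<le> z"
proof -
  have k0: "0 < 2 * real k" using k by simp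
  have k2: "2 * real k + 1 > 0" using k by simp
  have "(2 * real k + 1) * (1 - 2 * real k * z) \<le> c \<longleftrightarrow> 1 - 2 * real k * z \<le> c / (2 * real k + 1)"
    using k2 by (simp add: pos_le_divide_eq mult.commute)
  also have "\<dots> \<longleftrightarrow> 1 - c / (2 * real k + 1) \<le> z * (2 * real k)" by (simp add: algebra_simps)
  also have "\<dots> \<longleftrightarrow> aa c k \<le> z" unfolding aa_def using k0 by (simp add: pos_divide_le_eq)
  finally show ?thesis .
qed

lemma plus_y:
  assumes k: "k \<ge> 1"
  shows "(2 * real k - 1) * (2 * real k * z - 1) \<le> c \<longleftrightarrow> z \<le> bb c k"
proof -
  have k0: "0 < 2 * real k" using k by simp
  have k1: "2 * real k - 1 > 0" using k by simp
  have "(2 * real k - 1) * (2 * real k * z - 1) \<le> c \<longleftrightarrow> 2 * real k * z - 1 \<le> c / (2 * real k - 1)"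
    using k1 by (simp add: pos_le_divide_eq mult.commute)
  also have "\<dots> \<longleftrightarrow> z * (2 * real k) \<le> 1 + c / (2 * real k - 1)" by (simp add: algebra_simps)
  also have "\<dots> \<longleftrightarrow> z \<le> bb c k" unfolding bb_def using k0 by (simp add: pos_le_divide_eq)
  finally show ?thesis .
qed

lemma s1_Irr: assumes z: "z \<in> Irr" shows "s1 z \<noteq> 0"
proof -
  have z0: "0 < z" using Irr_D[OF z] by auto
  obtain k :: nat where k: "k \<ge> 1" and h: "(2 * real k - 1 < 1 / z \<and> 1 / z < 2 * real k) \<or> (2 * real k < 1 / z \<and> 1 / z < 2 * real k + 1)"
    using half_exists[OF z] by blast
  then show ?thesis using plus_eval(3)[OF z0 k] minus_eval(3)[OF z0 k] by auto
qed

lemma y_pt: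
  assumes x: "x \<in> Irr" and n: "n \<ge> 2" and c: "0 \<le> c" "c \<le> 1"
  shows "y n x \<le> c \<longleftrightarrow> (\<exists>k\<ge>1. (T ^^ (n - 2)) x \<in> {aa c k..bb c k})"
proof -
  define z where "z = (T ^^ (n - 2)) x"
  have zI: "z \<in> Irr" using funpow_Irr[OF x] z_def by simp
  have z0: "0 < z" using Irr_D[OF zI] by auto
  have Te: "(T ^^ (n - 1)) x = T z"
  proof -
    have "n - 1 = Suc (n - 2)" using n by simp
    then show ?thesis by (simp add: z_def)
  qed
  have nn: "n - 1 - 1 = n - 2" by simp
  have de: "d (n - 1) x = d1 z" unfolding d_def z_def nn ..
  have se: "s (n - 1) x = s1 z" unfolding s_def z_def nn ..
  have epsr: "eps n x = s1 z * eps (n - 1) x"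
  proof -
    have "{1..<n} = insert (n - 1) {1..<n - 1}" using n by auto
    then show ?thesis unfolding eps_def se[symmetric] by simp
  qed
  have epsnz: "eps (n - 1) x \<noteq> 0"
  proof -
    have "s k x \<noteq> 0" for k unfolding s_def by (rule s1_Irr[OF funpow_Irr[OF x]])
    then show ?thesis unfolding eps_def by simp
  qed
  have yd: "y n x = (if eps n x = eps (n - 1) x then (real_of_int (d (n - 1) x) - 1) * T z
      else if eps n x = - eps (n - 1) x then (real_of_int (d (n - 1) x) + 1) * T z else 0)"
    using n unfolding y_def Te by simp
  have piece: "k' = k" if k: "k \<ge> 1" and k': "k' \<ge> 1" and zk': "z \<in> {aa c k'..bb c k'}"
      and w: "2 * real k - 1 < 1 / z" "1 / z < 2 * real k + 1" for k k'
  proof -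
    note b = ab_bounds[OF k' c]
    have "2 * real k' - 1 < 1 / z \<and> 1 / z < 2 * real k' + 1"
      using piece_closed[OF zI k'] b zk' by auto
    then show ?thesis using w by (intro nat_eq_from_real) auto
  qed
  obtain k :: nat where k: "k \<ge> 1" and h: "(2 * real k - 1 < 1 / z \<and> 1 / z < 2 * real k) \<or> (2 * real k < 1 / z \<and> 1 / z < 2 * real k + 1)"
    using half_exists[OF zI] by blast
  note b = ab_bounds[OF k c]
  from h show ?thesis
  proof
    assume a: "2 * real k - 1 < 1 / z \<and> 1 / z < 2 * real k"
    note ev = plus_eval[OF z0 k] 
    have ev1: "T z = 2 * real k * z - 1" "d1 z = 2 * int k" "s1 z = 1" using ev a by auto
    have "eps n x = eps (n - 1) x" using epsr ev1(3) by simp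
    then have yv: "y n x = (2 * real k - 1) * (2 * real k * z - 1)" using yd de ev1 by simp
    have zb: "1 / (2 * real k) < z" using a z0 k by (simp add: field_simps)
    have "(\<exists>k'\<ge>1. z \<in> {aa c k'..bb c k'}) \<longleftrightarrow> z \<le> bb c k"
    proof
      assume "\<exists>k'\<ge>1. z \<in> {aa c k'..bb c k'}"
      then obtain k' where k': "k' \<ge> 1" "z \<in> {aa c k'..bb c k'}" by blast
      then have "k' = k" using piece[OF k k'(1) k'(2)] a by auto
      then show "z \<le> bb c k" using k' by simp
    next
      assume "z \<le> bb c k"
      then show "\<exists>k'\<ge>1. z \<in> {aa c k'..bb c k'}" using k b(2) zb by (intro exI[of _ k]) auto
    qed
    then show ?thesis unfolding yv plus_y[OF k] z_def by simp
  next
    assume a: "2 * real k < 1 / z \<and> 1 / z < 2 * real k + 1"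
    note ev = minus_eval[OF z0 k] 
    have ev1: "T z = 1 - 2 * real k * z" "d1 z = 2 * int k" "s1 z = -1" using ev a by auto
    have e1: "eps n x = - eps (n - 1) x" using epsr ev1(3) by simp
    have "eps n x \<noteq> eps (n - 1) x" using e1 epsnz by simp
    then have yv: "y n x = (2 * real k + 1) * (1 - 2 * real k * z)" using yd de ev1 e1 by simp
    have zb: "z < 1 / (2 * real k)" using a z0 k by (simp add: field_simps)
    have "(\<exists>k'\<ge>1. z \<in> {aa c k'..bb c k'}) \<longleftrightarrow> aa c k \<le> z"
    proof
      assume "\<exists>k'\<ge>1. z \<in> {aa c k'..bb c k'}"
      then obtain k' where k': "k' \<ge> 1" "z \<in> {aa c k'..bb c k'}" by blast
      then have "k' = k" using piece[OF k k'(1) k'(2)] a by auto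
      then show "aa c k \<le> z" using k' by simp
    next
      assume "aa c k \<le> z"
      then show "\<exists>k'\<ge>1. z \<in> {aa c k'..bb c k'}" using k b(3) zb by (intro exI[of _ k]) auto
    qed
    then show ?thesis unfolding yv minus_y[OF k] z_def by simp
  qed
qed

lemma ex_Suc: "(\<exists>k::nat\<ge>1. P k) \<longleftrightarrow> (\<exists>i. P (Suc i))"
proof
  assume "\<exists>k::nat\<ge>1. P k"
  then obtain k where "k \<ge> 1" "P k" by blast
  then have "P (Suc (k - 1))" by simp
  then show "\<exists>i. P (Suc i)" by blast
qed auto

theorem lemma3p4:
  fixes c :: real and n :: nat
  assumes "0 \<le> c" and "c \<le> 1" and "n \<ge> 1"
  shows "{x \<in> Irr. y n x \<le> c} \<in> sets lebesgue \<and> measure lebesgue {x \<in> Irr. y n x \<le> c} = c"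
proof (cases "n = 1")
  case True
  have "{x \<in> Irr. y n x \<le> c} = {x \<in> Irr. x \<in> {0..c}}" using True Irr_sub by (auto simp: y_def)
  also have "\<dots> = {0..c} - \<rat>" by (rule Irr_Icc) (use assms in auto)
  finally show ?thesis using Icc_minus_Rats[of 0 c] assms by simp
next
  case False
  then have n2: "n \<ge> 2" using assms by simp
  define m where "m = n - 2"
  obtain Cf where IH: "\<forall>j\<ge>1. \<forall>u v. 1 / (2 * real j + 1) \<le> u \<longrightarrow> u \<le> v \<longrightarrow> v \<le> 1 / (2 * real j - 1) \<longrightarrow>
     Sset m u v \<in> sets lebesgue \<and> measure lebesgue (Sset m u v) = Cf j * (v - u)"
    using Inv_all[of m] unfolding Inv_def by blast
  define A where "A i = Sset m (aa c (Suc i)) (bb c (Suc i))" for i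
  define B where "B i = Sset m (1 / (2 * real (Suc i) + 1)) (1 / (2 * real (Suc i) - 1))" for i
  define L where "L i = 1 / (2 * real (Suc i) - 1) - 1 / (2 * real (Suc i) + 1)" for i
  have eqA: "{x \<in> Irr. y n x \<le> c} = (\<Union>i. A i)"
  proof (intro set_eqI)
    fix x
    show "x \<in> {x \<in> Irr. y n x \<le> c} \<longleftrightarrow> x \<in> (\<Union>i. A i)"
    proof (cases "x \<in> Irr")
      case True
      show ?thesis using y_pt[OF True n2 assms(1,2)] ex_Suc[of "\<lambda>k. (T ^^ (n - 2)) x \<in> {aa c k..bb c k}"] True
        unfolding A_def Sset_def m_def by auto
    qed (auto simp: A_def Sset_def)
  qed
  have eqI: "Irr = (\<Union>i. B i)"
  proof
    show "(\<Union>i. B i) \<subseteq> Irr" unfolding B_def Sset_def by auto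
    show "Irr \<subseteq> (\<Union>i. B i)"
    proof
      fix x assume x: "x \<in> Irr"
      define z where "z = (T ^^ m) x"
      have zI: "z \<in> Irr" unfolding z_def by (rule funpow_Irr[OF x])
      have z0: "0 < z" using Irr_D[OF zI] by auto
      obtain k :: nat where k: "k \<ge> 1" and h: "(2 * real k - 1 < 1 / z \<and> 1 / z < 2 * real k) \<or> (2 * real k < 1 / z \<and> 1 / z < 2 * real k + 1)"
        using half_exists[OF zI] by blast
      have k1: "2 * real k - 1 > 0" using k by simp
      have w: "2 * real k - 1 \<le> 1 / z" "1 / z \<le> 2 * real k + 1" using h by auto
      have "1 / (2 * real k + 1) \<le> z" "z \<le> 1 / (2 * real k - 1)" using w z0 k1 by (auto simp: field_simps)
      moreover have "Suc (k - 1) = k" using k by simp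
      ultimately have "x \<in> B (k - 1)" unfolding B_def Sset_def using x z_def by auto
      then show "x \<in> (\<Union>i. B i)" by blast
    qed
  qed
  have mA: "A i \<in> sets lebesgue \<and> measure lebesgue (A i) = c * (Cf (Suc i) * L i)" for i
  proof -
    note b = ab_bounds[of "Suc i" c, OF _ assms(1,2)]
    have ab: "aa c (Suc i) \<le> bb c (Suc i)" using b by auto
    have "A i \<in> sets lebesgue \<and> measure lebesgue (A i) = Cf (Suc i) * (bb c (Suc i) - aa c (Suc i))"
      unfolding A_def using IH[rule_format, of "Suc i" "aa c (Suc i)" "bb c (Suc i)"] b ab by simp
    then show ?thesis using b(5) unfolding L_def by simp
  qed
  have mB: "B i \<in> sets lebesgue \<and> measure lebesgue (B i) = Cf (Suc i) * L i" for i
  proof -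
    have "1 / (2 * real (Suc i) + 1) \<le> 1 / (2 * real (Suc i) - 1)" by (intro inv_le) auto
    then show ?thesis unfolding B_def L_def
      using IH[rule_format, of "Suc i" "1 / (2 * real (Suc i) + 1)" "1 / (2 * real (Suc i) - 1)"] by simp
  qed
  have AB: "A i \<subseteq> B i" for i
    using ab_bounds[of "Suc i" c, OF _ assms(1,2)] unfolding A_def B_def Sset_def by auto
  have dB: "disjoint_family B"
    unfolding disjoint_family_on_def
  proof (intro ballI impI)
    fix i i' :: nat assume ne: "i \<noteq> i'"
    show "B i \<inter> B i' = {}"
    proof (rule ccontr)
      assume "B i \<inter> B i' \<noteq> {}"
      then obtain x where x: "x \<in> B i" "x \<in> B i'" by blast
      then have xI: "x \<in> Irr" unfolding B_def Sset_def by auto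
      have "2 * real (Suc i) - 1 < 1 / (T ^^ m) x \<and> 1 / (T ^^ m) x < 2 * real (Suc i) + 1"
        using x(1) unfolding B_def Sset_def by (intro piece_closed[OF funpow_Irr[OF xI]]) auto
      moreover have "2 * real (Suc i') - 1 < 1 / (T ^^ m) x \<and> 1 / (T ^^ m) x < 2 * real (Suc i') + 1"
        using x(2) unfolding B_def Sset_def by (intro piece_closed[OF funpow_Irr[OF xI]]) auto
      ultimately have "Suc i = Suc i'" by (intro nat_eq_from_real) auto
      then show False using ne by simp
    qed
  qed
  have dA: "disjoint_family A"
    using dB AB unfolding disjoint_family_on_def by blast
  have subA: "(\<Union>i. A i) \<subseteq> {0..1}" "(\<Union>i. B i) \<subseteq> {0..1}"
    using Irr_sub unfolding A_def B_def Sset_def by auto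
  have sA: "(\<lambda>i. measure lebesgue (A i)) sums measure lebesgue (\<Union>i. A i)"
    by (rule measure_UNION) (use mA dA fin_em[OF subA(1)] in auto)
  have sB: "(\<lambda>i. measure lebesgue (B i)) sums measure lebesgue (\<Union>i. B i)"
    by (rule measure_UNION) (use mB dB fin_em[OF subA(2)] in auto)
  have "Irr = {x \<in> Irr. x \<in> {0..1}}" using Irr_sub by auto
  also have "\<dots> = {0..1} - \<rat>" by (rule Irr_Icc) auto
  finally have mI: "measure lebesgue Irr = 1" using Icc_minus_Rats[of 0 1] by simp
  have sB': "(\<lambda>i. Cf (Suc i) * L i) sums 1" using sB mB eqI mI by simp
  have "(\<lambda>i. c * (Cf (Suc i) * L i)) sums (c * 1)" by (rule sums_mult[OF sB'])
  moreover have "(\<lambda>i. c * (Cf (Suc i) * L i)) sums measure lebesgue (\<Union>i. A i)" using sA mA by simp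
  ultimately have "measure lebesgue (\<Union>i. A i) = c" using sums_unique2 by fastforce
  moreover have "(\<Union>i. A i) \<in> sets lebesgue" using mA by auto
  ultimately show ?thesis unfolding eqA by simp
qed

end
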